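(* Let $R$ be a local ring and $s\in R$ a central element. Then $A\in M_2(R;s)$ is strongly clean if and only if one of the following holds: (1) $A\in U\big(M_2(R;s)\big)$; (2) $I_2-A\in U\big(M_2(R;s)\big)$; (3) $s\in U(R)$ and $A$ is similar to $\left[\begin{smallmatrix} w&0\\ 0&v\end{smallmatrix}\right]$ for some $v\in 1+J(R)$, $w\in J(R)$; (4) $s\in J(R)$ and $A$ is similar to $\left[\begin{smallmatrix} v&0\\ 0&w\end{smallmatrix}\right]$ or to $\left[\begin{smallmatrix} w&0\\ 0&v\end{smallmatrix}\right]$ for some $v\in 1+J(R)$, $w\in J(R)$.
   Context: All rings are associative with identity. A ring $R$ is local if $R/J(R)$ is a division ring, where $J(R)$ is the Jacobson radical; $U(T)$ is the group of units of a ring $T$. For a ring $R$ and a central element $s\in R$, $M_2(R;s)$ denotes the ring whose elements are the $2\times 2$ arrays $\left[\begin{smallmatrix} a&b\\ c&d\end{smallmatrix}\right]$ with $a,b,c,d\in R$, with componentwise addition and multiplication $\left[\begin{smallmatrix} a&b\\ c&d\end{smallmatrix}\right]\left[\begin{smallmatrix} a'&b'\\ c'&d'\end{smallmatrix}\right]=\left[\begin{smallmatrix} aa'+s^2bc'&ab'+bd'\\ ca'+dc'&s^2cb'+dd'\end{smallmatrix}\right]$, with identity $I_2$. Two elements $A,B\in M_2(R;s)$ are similar if $B=P^{-1}AP$ for some unit $P$ of $M_2(R;s)$. An element $a$ of a ring $T$ is strongly clean if there is an idempotent $e\in T$ with $ae=ea$ and $a-e\in U(T)$. *)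

theory Defs
  imports Main
begin

definition is_unit :: "'a::ring_1 \<Rightarrow> bool" where
  "is_unit x \<longleftrightarrow> (\<exists>y. x * y = 1 \<and> y * x = 1)"

definition left_ideal :: "'a::ring_1 set \<Rightarrow> bool" where
  "left_ideal I \<longleftrightarrow> 0 \<in> I \<and> (\<forall>x\<in>I. \<forall>y\<in>I. x + y \<in> I) \<and> (\<forall>x\<in>I. - x \<in> I)
     \<and> (\<forall>r. \<forall>x\<in>I. r * x \<in> I)"

definition maximal_left_ideal :: "'a::ring_1 set \<Rightarrow> bool" where
  "maximal_left_ideal M \<longleftrightarrow> left_ideal M \<and> M \<noteq> UNIV \<and>
     (\<forall>I. left_ideal I \<and> M \<subseteq> I \<longrightarrow> I = M \<or> I = UNIV)"

definition jacobson :: "'a::ring_1 set" where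
  "jacobson = \<Inter> {M. maximal_left_ideal M}"

text \<open>R is local iff R/J(R) is a division ring, written out on cosets:
  R/J(R) is nonzero and every coset x + J(R) different from J(R) has a two-sided inverse.\<close>
definition local_ring :: "'a::ring_1 itself \<Rightarrow> bool" where
  "local_ring (TYPE('a)) \<longleftrightarrow> (1::'a) \<notin> jacobson \<and>
     (\<forall>x::'a. x \<notin> jacobson \<longrightarrow> (\<exists>y. x * y - 1 \<in> jacobson \<and> y * x - 1 \<in> jacobson))"

definition central :: "'a::ring_1 \<Rightarrow> bool" where
  "central s \<longleftrightarrow> (\<forall>x. s * x = x * s)"

datatype 'a m2 = M2 'a 'a 'a 'a   (* M2 a b c d  =  [a b; c d] *)

fun m2add :: "'a::ring_1 m2 \<Rightarrow> 'a m2 \<Rightarrow> 'a m2" where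
  "m2add (M2 a b c d) (M2 a' b' c' d') = M2 (a + a') (b + b') (c + c') (d + d')"

fun m2sub :: "'a::ring_1 m2 \<Rightarrow> 'a m2 \<Rightarrow> 'a m2" where
  "m2sub (M2 a b c d) (M2 a' b' c' d') = M2 (a - a') (b - b') (c - c') (d - d')"

fun m2mult :: "'a::ring_1 \<Rightarrow> 'a m2 \<Rightarrow> 'a m2 \<Rightarrow> 'a m2" where
  "m2mult s (M2 a b c d) (M2 a' b' c' d') =
     M2 (a * a' + s^2 * b * c') (a * b' + b * d') (c * a' + d * c') (s^2 * c * b' + d * d')"

definition m2one :: "'a::ring_1 m2" where
  "m2one = M2 1 0 0 1"

definition m2_unit :: "'a::ring_1 \<Rightarrow> 'a m2 \<Rightarrow> bool" where
  "m2_unit s P \<longleftrightarrow> (\<exists>Q. m2mult s P Q = m2one \<and> m2mult s Q P = m2one)"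

definition m2_similar :: "'a::ring_1 \<Rightarrow> 'a m2 \<Rightarrow> 'a m2 \<Rightarrow> bool" where
  "m2_similar s A B \<longleftrightarrow> (\<exists>P Q. m2mult s P Q = m2one \<and> m2mult s Q P = m2one \<and>
       B = m2mult s (m2mult s Q A) P)"

definition m2_strongly_clean :: "'a::ring_1 \<Rightarrow> 'a m2 \<Rightarrow> bool" where
  "m2_strongly_clean s A \<longleftrightarrow> (\<exists>E. m2mult s E E = E \<and> m2mult s A E = m2mult s E A \<and>
       m2_unit s (m2sub A E))"

end

theory Submission
  imports Defs
begin


lemma left_ideal_one: "left_ideal I \<Longrightarrow> 1 \<in> I \<Longrightarrow> I = UNIV"
  unfolding left_ideal_def by (metis UNIV_eq_I mult.right_neutral)

lemma exists_maximal:
  fixes L :: "'a::ring_1 set"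
  assumes L: "left_ideal L" and n1: "(1::'a) \<notin> L"
  shows "\<exists>M. maximal_left_ideal M \<and> L \<subseteq> M"
proof -
  define AA where "AA = {I::'a set. left_ideal I \<and> L \<subseteq> I \<and> 1 \<notin> I}"
  have "\<exists>M\<in>AA. \<forall>X\<in>AA. M \<subseteq> X \<longrightarrow> X = M"
  proof (rule subset_Zorn)
    fix C assume ch: "subset.chain AA C"
    show "\<exists>U\<in>AA. \<forall>X\<in>C. X \<subseteq> U"
    proof (cases "C = {}")
      case True thus ?thesis using L n1 by (auto simp: AA_def)
    next
      case False
      have CA: "C \<subseteq> AA" and cmp: "\<And>X Y. X \<in> C \<Longrightarrow> Y \<in> C \<Longrightarrow> X \<subseteq> Y \<or> Y \<subseteq> X"
        using ch by (auto simp: subset.chain_def)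
      have li: "left_ideal (\<Union>C)"
        unfolding left_ideal_def
      proof (intro conjI ballI allI)
        show "0 \<in> \<Union>C" using False CA by (auto simp: AA_def left_ideal_def)
      next
        fix x y assume "x \<in> \<Union>C" "y \<in> \<Union>C"
        then obtain X Y where X: "X \<in> C" "x \<in> X" and Y: "Y \<in> C" "y \<in> Y" by auto
        show "x + y \<in> \<Union>C"
        proof (cases "X \<subseteq> Y")
          case True
          then have "x \<in> Y" using X by auto
          moreover have "left_ideal Y" using Y CA by (auto simp: AA_def)
          ultimately have "x + y \<in> Y" using Y unfolding left_ideal_def by blast
          thus ?thesis using Y by auto
        next
          case False
          then have "Y \<subseteq> X" using cmp X Y by blast
          then have "y \<in> X" using Y by auto
          moreover have "left_ideal X" using X CA by (auto simp: AA_def)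
          ultimately have "x + y \<in> X" using X unfolding left_ideal_def by blast
          thus ?thesis using X by auto
        qed
      next
        fix x assume "x \<in> \<Union>C"
        then obtain X where X: "X \<in> C" "x \<in> X" by auto
        moreover have "left_ideal X" using X CA by (auto simp: AA_def)
        ultimately show "- x \<in> \<Union>C" unfolding left_ideal_def by blast
      next
        fix r x assume "x \<in> \<Union>C"
        then obtain X where X: "X \<in> C" "x \<in> X" by auto
        moreover have "left_ideal X" using X CA by (auto simp: AA_def)
        ultimately show "r * x \<in> \<Union>C" unfolding left_ideal_def by blast
      qed
      have "L \<subseteq> \<Union>C" using False CA by (auto simp: AA_def)
      moreover have "1 \<notin> \<Union>C" using CA by (auto simp: AA_def)
      ultimately show ?thesis using li by (auto simp: AA_def)
    qed
  qed
  then obtain M where M: "M \<in> AA" and mx: "\<forall>X\<in>AA. M \<subseteq> X \<longrightarrow> X = M" by blast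
  have "maximal_left_ideal M"
    unfolding maximal_left_ideal_def
  proof (intro conjI allI impI)
    show "left_ideal M" using M by (auto simp: AA_def)
    show "M \<noteq> UNIV" using M by (auto simp: AA_def)
    fix I assume I: "left_ideal I \<and> M \<subseteq> I"
    show "I = M \<or> I = UNIV"
    proof (cases "1 \<in> I")
      case True thus ?thesis using I left_ideal_one by blast
    next
      case False
      then have "I \<in> AA" using I M by (auto simp: AA_def)
      thus ?thesis using mx I by blast
    qed
  qed
  thus ?thesis using M by (auto simp: AA_def)
qed

lemma jac_left_ideal: "left_ideal (jacobson :: 'a::ring_1 set)"
  unfolding jacobson_def left_ideal_def maximal_left_ideal_def by auto

lemma jac_mult_left: "x \<in> jacobson \<Longrightarrow> r * x \<in> (jacobson :: 'a::ring_1 set)"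
  using jac_left_ideal unfolding left_ideal_def by blast
lemma jac_add: "x \<in> jacobson \<Longrightarrow> y \<in> jacobson \<Longrightarrow> x + y \<in> (jacobson :: 'a::ring_1 set)"
  using jac_left_ideal unfolding left_ideal_def by blast
lemma jac_uminus: "x \<in> jacobson \<Longrightarrow> - x \<in> (jacobson :: 'a::ring_1 set)"
  using jac_left_ideal unfolding left_ideal_def by blast
lemma jac_zero: "0 \<in> (jacobson :: 'a::ring_1 set)"
  using jac_left_ideal unfolding left_ideal_def by blast
lemma jac_diff: "x \<in> jacobson \<Longrightarrow> y \<in> jacobson \<Longrightarrow> x - y \<in> (jacobson :: 'a::ring_1 set)"
  by (metis diff_conv_add_uminus jac_add jac_uminus)

lemma left_inv_one_minus:
  fixes x :: "'a::ring_1"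
  assumes x: "x \<in> jacobson"
  shows "\<exists>u. u * (1 - x) = 1"
proof (rule ccontr)
  assume nu: "\<not> ?thesis"
  define L where "L = {r * (1 - x) | r. True}"
  have "left_ideal L" unfolding left_ideal_def L_def
  proof (intro conjI ballI allI)
    show "0 \<in> {r * (1 - x) |r. True}" by (rule CollectI, rule exI[of _ 0], simp)
    fix a b assume "a \<in> {r * (1 - x) |r. True}" "b \<in> {r * (1 - x) |r. True}"
    then obtain r1 r2 where "a = r1 * (1 - x)" "b = r2 * (1-x)" by auto
    then show "a + b \<in> {r * (1 - x) |r. True}" by (auto intro!: exI[of _ "r1 + r2"] simp: distrib_right)
  next
    fix a assume "a \<in> {r * (1 - x) |r. True}"
    then obtain r1 where "a = r1 * (1 - x)" by auto
    then show "- a \<in> {r * (1 - x) |r. True}" by (auto intro!: exI[of _ "- r1"])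
  next
    fix t a assume "a \<in> {r * (1 - x) |r. True}"
    then obtain r1 where "a = r1 * (1 - x)" by auto
    then show "t * a \<in> {r * (1 - x) |r. True}" by (auto intro!: exI[of _ "t * r1"] simp: mult.assoc)
  qed
  moreover have "1 \<notin> L" using nu by (auto simp: L_def)
  ultimately obtain M where M: "maximal_left_ideal M" "L \<subseteq> M" using exists_maximal by blast
  have "1 - x \<in> M" using M by (auto simp: L_def intro!: exI[of _ 1])
  moreover have "x \<in> M" using x M(1) by (auto simp: jacobson_def)
  ultimately have "1 \<in> M" using M(1) unfolding maximal_left_ideal_def left_ideal_def
    by (metis add_diff_cancel_left' diff_add_cancel)
  then have "M = UNIV" using M(1) left_ideal_one unfolding maximal_left_ideal_def by blast
  thus False using M(1) unfolding maximal_left_ideal_def by blast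
qed

lemma unit_one_minus:
  fixes x :: "'a::ring_1"
  assumes x: "x \<in> jacobson"
  shows "is_unit (1 - x)"
proof -
  obtain u where u: "u * (1 - x) = 1" using left_inv_one_minus[OF x] by blast
  have "u = 1 - (- (u * x))" using u by (simp add: algebra_simps)
  moreover have "- (u * x) \<in> jacobson" using x jac_mult_left jac_uminus by blast
  ultimately obtain u' where u': "u' * u = 1" using left_inv_one_minus by metis
  have "u' = u' * u * (1 - x)" using u by (simp add: mult.assoc)
  also have "\<dots> = 1 - x" using u' by simp
  finally have "(1 - x) * u = 1" using u' by simp
  thus ?thesis using u unfolding is_unit_def by blast
qed



lemma unit_mult: "is_unit (a::'a::ring_1) \<Longrightarrow> is_unit b \<Longrightarrow> is_unit (a * b)"
  unfolding is_unit_def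
proof -
  assume "\<exists>y. a * y = 1 \<and> y * a = 1" "\<exists>y. b * y = 1 \<and> y * b = 1"
  then obtain x y where "a * x = 1" "x * a = 1" "b * y = 1" "y * b = 1" by blast
  then have "a * b * (y * x) = 1" "y * x * (a * b) = 1"
    by (simp_all add: mult.assoc) (metis mult.assoc mult_1_left)+
  thus "\<exists>z. a * b * z = 1 \<and> z * (a * b) = 1" by blast
qed

lemma unit_not_jac:
  fixes x :: "'a::ring_1"
  assumes loc: "local_ring TYPE('a)" and u: "is_unit x"
  shows "x \<notin> jacobson"
proof
  assume "x \<in> jacobson"
  obtain y where "y * x = 1" using u unfolding is_unit_def by blast
  then have "1 \<in> (jacobson::'a set)" using jac_mult_left \<open>x \<in> jacobson\<close> by metis
  thus False using loc unfolding local_ring_def by blast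
qed

lemma not_jac_unit:
  fixes x :: "'a::ring_1"
  assumes loc: "local_ring TYPE('a)" and x: "x \<notin> jacobson"
  shows "is_unit x"
proof -
  obtain y where y: "x * y - 1 \<in> jacobson" "y * x - 1 \<in> jacobson"
    using loc x unfolding local_ring_def by blast
  have "is_unit (1 - (1 - x * y))" by (rule unit_one_minus) (metis y(1) jac_uminus minus_diff_eq)
  then obtain z where z: "x * y * z = 1" unfolding is_unit_def by auto
  have "is_unit (1 - (1 - y * x))" by (rule unit_one_minus) (metis y(2) jac_uminus minus_diff_eq)
  then obtain z' where z': "z' * (y * x) = 1" unfolding is_unit_def by auto
  have "z' * y = z' * y * (x * (y * z))" using z by (simp add: mult.assoc)
  also have "\<dots> = (z' * (y * x)) * (y * z)" by (simp add: mult.assoc)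
  also have "\<dots> = y * z" using z' by simp
  finally have "(y * z) * x = 1" using z' by (metis mult.assoc)
  moreover have "x * (y * z) = 1" using z by (simp add: mult.assoc)
  ultimately show ?thesis unfolding is_unit_def by blast
qed

lemma unit_iff:
  fixes x :: "'a::ring_1"
  assumes loc: "local_ring TYPE('a)"
  shows "is_unit x \<longleftrightarrow> x \<notin> jacobson"
  using unit_not_jac[OF loc] not_jac_unit[OF loc] by blast

lemma jac_mult_right:
  fixes x :: "'a::ring_1"
  assumes loc: "local_ring TYPE('a)" and x: "x \<in> jacobson"
  shows "x * r \<in> jacobson"
proof (cases "r \<in> jacobson")
  case True thus ?thesis using jac_mult_left by blast
next
  case False
  then obtain r' where r': "r * r' = 1" using not_jac_unit[OF loc] unfolding is_unit_def by blast
  show ?thesis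
  proof (rule ccontr)
    assume "x * r \<notin> jacobson"
    then have "is_unit (x * r)" using not_jac_unit[OF loc] by blast
    moreover have "is_unit r'"
      using r' not_jac_unit[OF loc False] unfolding is_unit_def by (metis mult.assoc mult_1_left mult_1_right)
    ultimately have "is_unit (x * r * r')" using unit_mult by blast
    then have "is_unit x" using r' by (simp add: mult.assoc)
    thus False using unit_not_jac[OF loc] x by blast
  qed
qed

lemma unit_mult_D:
  fixes a :: "'a::ring_1"
  assumes loc: "local_ring TYPE('a)" and u: "is_unit (a * b)"
  shows "is_unit a \<and> is_unit b"
  using u unit_iff[OF loc] jac_mult_right[OF loc] jac_mult_left by metis

lemma idem_local:
  fixes x :: "'a::ring_1"
  assumes loc: "local_ring TYPE('a)" and x: "x * x = x"
  shows "x = 0 \<or> x = 1"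
proof (cases "x \<in> jacobson")
  case True
  then obtain y where y: "(1 - x) * y = 1" "y * (1 - x) = 1"
    using unit_one_minus unfolding is_unit_def by blast
  have "x * (1 - x) = 0" using x by (simp add: algebra_simps)
  then have "x * (1 - x) * y = 0" by simp
  then have "x = 0" using y by (simp add: mult.assoc)
  thus ?thesis by simp
next
  case False
  then obtain y where y: "y * x = 1" using not_jac_unit[OF loc] unfolding is_unit_def by blast
  have "y * (x * x) = y * x" using x by simp
  then have "x = 1" using y by (metis mult.assoc mult_1_left)
  thus ?thesis by simp
qed

lemma unit_uminus: "is_unit (x::'a::ring_1) \<Longrightarrow> is_unit (- x)"
  unfolding is_unit_def by (metis minus_mult_minus)

lemma one_notin_jac: "local_ring TYPE('a) \<Longrightarrow> (1::'a::ring_1) \<notin> jacobson"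
  unfolding local_ring_def by blast



lemma central_sq: "central s \<Longrightarrow> x * (s^2 * y) = s^2 * (x * y)"
  unfolding central_def power2_eq_square
  by (metis mult.assoc)

lemma central_sq': "central s \<Longrightarrow> x * s^2 = s^2 * x"
  unfolding central_def power2_eq_square
  by (metis mult.assoc)

lemma m2_assoc:
  assumes "central s"
  shows "m2mult s (m2mult s A B) C = m2mult s A (m2mult s B C)"
  using central_sq[OF assms]
  by (cases A; cases B; cases C) (simp add: algebra_simps)

lemma m2_one_left[simp]: "m2mult s m2one A = A"
  by (cases A) (simp add: m2one_def)
lemma m2_one_right[simp]: "m2mult s A m2one = A"
  by (cases A) (simp add: m2one_def)

lemma m2_sub_right: "m2mult s A (m2sub B C) = m2sub (m2mult s A B) (m2mult s A C)"
  by (cases A; cases B; cases C) (simp add: algebra_simps)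
lemma m2_sub_left: "m2mult s (m2sub B C) A = m2sub (m2mult s B A) (m2mult s C A)"
  by (cases A; cases B; cases C) (simp add: algebra_simps)

lemma m2_unit_mult:
  assumes c: "central s" and "m2_unit s P" "m2_unit s R"
  shows "m2_unit s (m2mult s P R)"
proof -
  obtain P' where P: "m2mult s P P' = m2one" "m2mult s P' P = m2one" using assms unfolding m2_unit_def by blast
  obtain R' where R: "m2mult s R R' = m2one" "m2mult s R' R = m2one" using assms unfolding m2_unit_def by blast
  have "m2mult s (m2mult s P R) (m2mult s R' P') = m2one"
    using P R by (simp add: m2_assoc[OF c]) (metis m2_assoc[OF c] m2_one_left)
  moreover have "m2mult s (m2mult s R' P') (m2mult s P R) = m2one"
    using P R by (simp add: m2_assoc[OF c]) (metis m2_assoc[OF c] m2_one_left)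
  ultimately show ?thesis unfolding m2_unit_def by blast
qed

lemma m2_unit_conj:
  assumes c: "central s" and PQ: "m2mult s P Q = m2one" "m2mult s Q P = m2one"
    and u: "m2_unit s A"
  shows "m2_unit s (m2mult s (m2mult s Q A) P)"
  using c PQ u m2_unit_mult unfolding m2_unit_def by blast

lemma m2_conj_back:
  assumes c: "central s" and PQ: "m2mult s P Q = m2one" "m2mult s Q P = m2one"
  shows "m2mult s (m2mult s P (m2mult s (m2mult s Q A) P)) Q = A"
  using PQ by (simp add: m2_assoc[OF c]) (metis m2_assoc[OF c] m2_one_left)

lemma diag_unit: "m2_unit s (M2 x 0 0 y) \<longleftrightarrow> is_unit x \<and> is_unit y"
proof
  assume "m2_unit s (M2 x 0 0 y)"
  then obtain Q where "m2mult s (M2 x 0 0 y) Q = m2one" "m2mult s Q (M2 x 0 0 y) = m2one"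
    unfolding m2_unit_def by blast
  thus "is_unit x \<and> is_unit y" by (cases Q) (auto simp: m2one_def is_unit_def)
next
  assume "is_unit x \<and> is_unit y"
  then obtain x' y' where "x * x' = 1" "x' * x = 1" "y * y' = 1" "y' * y = 1" unfolding is_unit_def by blast
  then have "m2mult s (M2 x 0 0 y) (M2 x' 0 0 y') = m2one" "m2mult s (M2 x' 0 0 y') (M2 x 0 0 y) = m2one"
    by (simp_all add: m2one_def)
  thus "m2_unit s (M2 x 0 0 y)" unfolding m2_unit_def by blast
qed

lemma schur_unit:
  assumes c: "central s" and a: "a * a' = 1" "a' * a = 1"
    and x: "is_unit (d - s^2 * c * a' * b)"
  shows "m2_unit s (M2 a b c d)"
proof -
  define x where "x = d - s^2 * c * a' * b"
  have L: "m2_unit s (M2 1 0 (c * a') 1)"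
    unfolding m2_unit_def by (rule exI[of _ "M2 1 0 (- (c * a')) 1"]) (simp add: m2one_def)
  have U: "m2_unit s (M2 1 (a' * b) 0 1)"
    unfolding m2_unit_def by (rule exI[of _ "M2 1 (- (a' * b)) 0 1"]) (simp add: m2one_def)
  have D: "m2_unit s (M2 a 0 0 x)" using diag_unit a x unfolding x_def is_unit_def by blast
  have "M2 a b c d = m2mult s (m2mult s (M2 1 0 (c * a') 1) (M2 a 0 0 x)) (M2 1 (a' * b) 0 1)"
    using a central_sq[OF c] by (simp add: x_def mult.assoc algebra_simps) (metis mult.assoc mult_1_left)
  thus ?thesis using L U D m2_unit_mult[OF c] by metis
qed



lemma keyK:
  fixes e :: "'a::ring_1"
  assumes loc: "local_ring TYPE('a)" and c: "central s"
    and i: "e*e + s^2*f*g = e" and ii: "e*f + f*h = f" and iii: "g*e + h*g = g"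
    and iv: "s^2*g*f + h*h = h"
    and e: "e * e' = 1" "e' * e = 1"
    and ne: "M2 e f g h \<noteq> m2one"
  shows "s^2*g*e'*f = h"
proof -
  note cs = central_sq[OF c]
  have ee1: "\<And>x. e'*(e*x) = x" and ee2: "\<And>x. e*(e'*x) = x" using e by (metis mult.assoc mult_1_left)+
  define k where "k = s^2*g*e'*f - h"
  have fg: "s^2*(f*g) = e - e*e" using i by (simp add: algebra_simps mult.assoc)
  have kg: "k * g = 0"
  proof -
    have "s^2*g*e'*f*g = g*e'*(s^2*(f*g))" using cs by (simp add: mult.assoc)
    also have "\<dots> = g*e'*(e - e*e)" by (simp only: fg)
    also have "\<dots> = g - g*e" using ee1 ee2 e by (simp add: algebra_simps)
    finally show ?thesis using iii unfolding k_def by (simp add: algebra_simps) (metis add_left_cancel add.commute)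
  qed
  have fk: "f * k = 0"
  proof -
    have "f*(s^2*g*e'*f) = (s^2*(f*g))*e'*f" using cs by (simp add: mult.assoc)
    also have "\<dots> = (e - e*e)*e'*f" by (simp only: fg)
    also have "\<dots> = f - e*f" using ee1 ee2 e by (simp add: algebra_simps)
    finally show ?thesis using ii unfolding k_def by (simp add: algebra_simps) (metis add_left_cancel add.commute)
  qed
  have hk: "h * k = k"
  proof -
    have hg: "h * g = g - g * e" using iii by (simp add: algebra_simps)
    have "h*(s^2*g*e'*f) = s^2*((h*g)*e'*f)" using cs by (simp add: mult.assoc)
    also have "\<dots> = s^2*((g - g * e)*e'*f)" by (simp only: hg)
    also have "\<dots> = s^2*g*e'*f - s^2*g*f" using ee1 ee2 e by (simp add: algebra_simps)
    finally have hh: "h*(s^2*g*e'*f) = s^2*g*e'*f - s^2*g*f" .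
    have "h*k = h*(s^2*g*e'*f) - h*h" by (metis k_def right_diff_distrib)
    also have "\<dots> = s^2*g*e'*f - s^2*g*f - h*h" by (simp only: hh)
    also have "\<dots> = s^2*g*e'*f - (s^2*g*f + h*h)" by (simp only: diff_diff_eq)
    also have "\<dots> = k" by (simp only: iv k_def)
    finally show ?thesis .
  qed
  have kk: "(-k) * (-k) = -k"
  proof -
    have "k * k = (s^2*g*e'*f)*k - h*k" by (metis k_def left_diff_distrib)
    also have "\<dots> = s^2*g*e'*(f*k) - h*k" by (simp only: mult.assoc)
    finally have "k * k = s^2*g*e'*(f*k) - h*k" .
    thus ?thesis using fk hk by simp
  qed
  from idem_local[OF loc kk] have "k = 0 \<or> k = -1" by (auto simp: minus_equation_iff)
  moreover have "k \<noteq> -1"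
  proof
    assume k1: "k = -1"
    have "g = 0" using kg k1 by simp
    moreover have "f = 0" using fk k1 by simp
    moreover have "h = 1" using k1 \<open>g = 0\<close> unfolding k_def by (simp add: algebra_simps)
    moreover have "e = 1"
    proof -
      have "e * e = e" using i \<open>f = 0\<close> by simp
      then have "e' * (e * e) = e' * e" by simp
      thus "e = 1" using e by (metis mult.assoc mult_1_left)
    qed
    ultimately show False using ne by (simp add: m2one_def)
  qed
  ultimately show ?thesis unfolding k_def by simp
qed



lemma idem_eqs:
  assumes "m2mult s (M2 e f g h) (M2 e f g h) = M2 e f g h"
  shows "e*e + s^2*f*g = e" "e*f + f*h = f" "g*e + h*g = g" "s^2*g*f + h*h = h"
  using assms by simp_all

lemma conj_e:
  fixes e :: "'a::ring_1"
  assumes loc: "local_ring TYPE('a)" and c: "central s"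
    and idem: "m2mult s (M2 e f g h) (M2 e f g h) = M2 e f g h"
    and ne: "M2 e f g h \<noteq> m2one" and eu: "is_unit e"
  shows "\<exists>P Q. m2mult s P Q = m2one \<and> m2mult s Q P = m2one \<and>
           m2mult s (M2 e f g h) P = m2mult s P (M2 1 0 0 0)"
proof -
  obtain e' where e: "e * e' = 1" "e' * e = 1" using eu unfolding is_unit_def by blast
  note eq = idem_eqs[OF idem]
  have K: "s^2*g*e'*f = h" by (rule keyK[OF loc c eq e ne])
  have "(1 - h) - s^2 * g * e' * (- f) = 1" using K by (simp add: mult.assoc)
  then have "m2_unit s (M2 e (-f) g (1-h))"
    using schur_unit[OF c e, of "1-h" g "-f"] unfolding is_unit_def by force
  then obtain Q where PQ: "m2mult s (M2 e (-f) g (1-h)) Q = m2one" "m2mult s Q (M2 e (-f) g (1-h)) = m2one"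
    unfolding m2_unit_def by blast
  have "m2mult s (M2 e f g h) (M2 e (-f) g (1-h)) = m2mult s (M2 e (-f) g (1-h)) (M2 1 0 0 0)"
    using eq by (simp add: algebra_simps mult.assoc)
  thus ?thesis using PQ by blast
qed

lemma m2_idem_sub:
  assumes "m2mult s E E = E"
  shows "m2mult s (m2sub m2one E) (m2sub m2one E) = m2sub m2one E"
proof -
  have z: "m2sub X (m2sub E E) = X" for X by (cases X; cases E) simp
  have "m2mult s (m2sub m2one E) (m2sub m2one E) = m2sub (m2sub m2one E) (m2sub E (m2mult s E E))"
    by (simp add: m2_sub_left m2_sub_right)
  also have "\<dots> = m2sub m2one E" using assms z by simp
  finally show ?thesis .
qed

lemma sq_rearr:
  fixes s :: "'a::ring_1"
  assumes c: "central s"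
  shows "(s^2*g*u*f) * (s^2*g*u*f) = (s^2*g*u) * (s^2*(f*g)) * (u*f)"
    by (simp only: mult.assoc central_sq[OF c, of f])

lemma nontriv:
  fixes e :: "'a::ring_1"
  assumes loc: "local_ring TYPE('a)" and c: "central s"
    and idem: "m2mult s (M2 e f g h) (M2 e f g h) = M2 e f g h"
    and nz: "M2 e f g h \<noteq> M2 0 0 0 0" and ej: "e \<in> jacobson" and hj: "h \<in> jacobson"
  shows False
proof -
  have idem': "m2mult s (M2 (1-e) (-f) (-g) (1-h)) (M2 (1-e) (-f) (-g) (1-h)) = M2 (1-e) (-f) (-g) (1-h)"
    using m2_idem_sub[OF idem] by (simp add: m2one_def)
  obtain u where u: "(1-e)*u = 1" "u*(1-e) = 1" using unit_one_minus[OF ej] unfolding is_unit_def by blast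
  have ne: "M2 (1-e) (-f) (-g) (1-h) \<noteq> m2one" using nz by (auto simp: m2one_def)
  have K: "s^2*(-g)*u*(-f) = 1-h" by (rule keyK[OF loc c idem_eqs[OF idem'] u ne])
  define m where "m = s^2*g*u*f"
  have m: "m = 1 - h" using K by (simp add: m_def)
  have mnj: "m \<notin> jacobson"
  proof
    assume "m \<in> jacobson"
    then have "m + h \<in> jacobson" using hj jac_add by blast
    thus False using m one_notin_jac[OF loc] by simp
  qed
  have fg: "s^2*(f*g) = e - e*e" using idem_eqs(1)[OF idem] by (simp add: algebra_simps mult.assoc)
  have fgj: "s^2*(f*g) \<in> jacobson" unfolding fg by (rule jac_diff[OF ej jac_mult_left[OF ej]])
  have "m * m = (s^2*g*u) * (s^2*(f*g)) * (u*f)"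
    unfolding m_def by (rule sq_rearr[OF c])
  also have "\<dots> \<in> jacobson" by (rule jac_mult_right[OF loc, OF jac_mult_left[OF fgj]])
  finally have "m * m \<in> jacobson" .
  moreover have "is_unit (m * m)" using unit_mult[OF not_jac_unit[OF loc mnj] not_jac_unit[OF loc mnj]] .
  ultimately show False using unit_not_jac[OF loc] by blast
qed

fun m2swap :: "'a m2 \<Rightarrow> 'a m2" where
  "m2swap (M2 a b c d) = M2 d c b a"

lemma m2swap_mult: "m2swap (m2mult s X Y) = m2mult s (m2swap X) (m2swap Y)"
  by (cases X; cases Y) (simp add: algebra_simps)
lemma m2swap_one[simp]: "m2swap m2one = m2one"
  by (simp add: m2one_def)
lemma m2swap_swap[simp]: "m2swap (m2swap X) = X"
  by (cases X) simp

lemma conj_h: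
  fixes e :: "'a::ring_1"
  assumes loc: "local_ring TYPE('a)" and c: "central s"
    and idem: "m2mult s (M2 e f g h) (M2 e f g h) = M2 e f g h"
    and ne: "M2 e f g h \<noteq> m2one" and hu: "is_unit h"
  shows "\<exists>P Q. m2mult s P Q = m2one \<and> m2mult s Q P = m2one \<and>
           m2mult s (M2 e f g h) P = m2mult s P (M2 0 0 0 1)"
proof -
  have idem': "m2mult s (M2 h g f e) (M2 h g f e) = M2 h g f e"
    using arg_cong[OF idem, of m2swap] by (simp only: m2swap_mult) simp
  have ne': "M2 h g f e \<noteq> m2one" using ne by (auto simp: m2one_def)
  obtain P Q where PQ: "m2mult s P Q = m2one" "m2mult s Q P = m2one"
    "m2mult s (M2 h g f e) P = m2mult s P (M2 1 0 0 0)"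
    using conj_e[OF loc c idem' ne' hu] by blast
  have "m2mult s (m2swap P) (m2swap Q) = m2one" "m2mult s (m2swap Q) (m2swap P) = m2one"
    "m2mult s (M2 e f g h) (m2swap P) = m2mult s (m2swap P) (M2 0 0 0 1)"
    using arg_cong[OF PQ(1), of m2swap] arg_cong[OF PQ(2), of m2swap] arg_cong[OF PQ(3), of m2swap]
    by (simp_all only: m2swap_mult m2swap_one) simp
  thus ?thesis by blast
qed



lemma reduce:
  assumes c: "central s" and PQ: "m2mult s P Q = m2one" "m2mult s Q P = m2one"
    and EP: "m2mult s E P = m2mult s P F"
    and comm: "m2mult s A E = m2mult s E A" and u: "m2_unit s (m2sub A E)"
  defines "B \<equiv> m2mult s (m2mult s Q A) P"
  shows "m2mult s B F = m2mult s F B" "m2_unit s (m2sub B F)"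
    "m2_unit s B \<Longrightarrow> m2_unit s A"
    "m2_unit s (m2sub m2one B) \<Longrightarrow> m2_unit s (m2sub m2one A)"
    "m2_similar s A B"
proof -
  note as = m2_assoc[OF c]
  have QEP: "m2mult s (m2mult s Q E) P = F"
    using PQ EP by (metis as m2_one_left)
  have QE: "m2mult s Q E = m2mult s F Q"
    by (metis QEP PQ(1) as m2_one_right)
  have "m2mult s B F = m2mult s (m2mult s Q A) (m2mult s P F)" unfolding B_def by (simp add: as)
  also have "\<dots> = m2mult s (m2mult s Q (m2mult s A E)) P" using EP by (simp add: as)
  also have "\<dots> = m2mult s (m2mult s (m2mult s Q E) A) P" using comm by (simp add: as)
  also have "\<dots> = m2mult s F B" unfolding B_def QE by (simp add: as)
  finally show "m2mult s B F = m2mult s F B" .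
  have "m2sub B F = m2mult s (m2mult s Q (m2sub A E)) P"
    unfolding B_def QEP[symmetric] by (simp add: m2_sub_left m2_sub_right)
  thus "m2_unit s (m2sub B F)" using m2_unit_conj[OF c PQ u] by simp
  show "m2_unit s B \<Longrightarrow> m2_unit s A"
    using m2_unit_conj[OF c PQ(2) PQ(1), of B] m2_conj_back[OF c PQ, of A] unfolding B_def by simp
  have "m2sub m2one B = m2mult s (m2mult s Q (m2sub m2one A)) P"
    unfolding B_def using PQ by (simp add: m2_sub_left m2_sub_right)
  then show "m2_unit s (m2sub m2one B) \<Longrightarrow> m2_unit s (m2sub m2one A)"
    using m2_unit_conj[OF c PQ(2) PQ(1), of "m2sub m2one B"] m2_conj_back[OF c PQ, of "m2sub m2one A"] by simp
  show "m2_similar s A B" unfolding m2_similar_def B_def using PQ by blast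
qed

lemma similar_trans:
  assumes c: "central s" and "m2_similar s A B" "m2_similar s B C"
  shows "m2_similar s A C"
proof -
  obtain P1 Q1 where 1: "m2mult s P1 Q1 = m2one" "m2mult s Q1 P1 = m2one" "B = m2mult s (m2mult s Q1 A) P1"
    using assms unfolding m2_similar_def by blast
  obtain P2 Q2 where 2: "m2mult s P2 Q2 = m2one" "m2mult s Q2 P2 = m2one" "C = m2mult s (m2mult s Q2 B) P2"
    using assms unfolding m2_similar_def by blast
  have "m2mult s (m2mult s P1 P2) (m2mult s Q2 Q1) = m2one"
    using 1 2 by (metis m2_assoc[OF c] m2_one_left)
  moreover have "m2mult s (m2mult s Q2 Q1) (m2mult s P1 P2) = m2one"
    using 1 2 by (metis m2_assoc[OF c] m2_one_left)
  moreover have "C = m2mult s (m2mult s (m2mult s Q2 Q1) A) (m2mult s P1 P2)"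
    using 1 2 by (simp add: m2_assoc[OF c])
  ultimately show ?thesis unfolding m2_similar_def by blast
qed

lemma swap_similar:
  fixes s :: "'a::ring_1"
  assumes c: "central s" and su: "is_unit s"
  shows "m2_similar s (M2 v 0 0 w) (M2 w 0 0 v)"
proof -
  obtain t where t: "s * t = 1" "t * s = 1" using su unfolding is_unit_def by blast
  have tc: "\<And>x. t * x = x * t"
  proof -
    fix x
    have "t * x = t * x * (s * t)" using t by simp
    also have "\<dots> = t * (x * s) * t" by (simp add: mult.assoc)
    also have "\<dots> = t * (s * x) * t" using c unfolding central_def by simp
    also have "\<dots> = x * t" using t by (simp add: mult.assoc[symmetric])
    finally show "t * x = x * t" .
  qed
  have st: "s^2 * (t * t) = 1" using t unfolding power2_eq_square by (metis mult.assoc mult_1_left)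
  have st': "\<And>x. s^2 * (t * (x * t)) = x"
    by (metis st tc mult.assoc mult_1_left)
  have "m2mult s (M2 0 t t 0) (M2 0 t t 0) = m2one" using st by (simp add: m2one_def mult.assoc)
  moreover have "M2 w 0 0 v = m2mult s (m2mult s (M2 0 t t 0) (M2 v 0 0 w)) (M2 0 t t 0)"
    using st' by (simp add: mult.assoc)
  ultimately show ?thesis unfolding m2_similar_def by blast
qed

lemma sc_similar:
  assumes c: "central s" and sim: "m2_similar s A B" and sc: "m2_strongly_clean s B"
  shows "m2_strongly_clean s A"
proof -
  note as = m2_assoc[OF c]
  obtain P Q where PQ: "m2mult s P Q = m2one" "m2mult s Q P = m2one" and B: "B = m2mult s (m2mult s Q A) P"
    using sim unfolding m2_similar_def by blast
  obtain F where F: "m2mult s F F = F" "m2mult s B F = m2mult s F B" "m2_unit s (m2sub B F)"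
    using sc unfolding m2_strongly_clean_def by blast
  have A: "A = m2mult s (m2mult s P B) Q" using m2_conj_back[OF c PQ, of A] B by simp
  define E where "E = m2mult s (m2mult s P F) Q"
  have "m2mult s E E = E" unfolding E_def using PQ F(1) by (simp add: as) (metis as m2_one_left)
  moreover have "m2mult s A E = m2mult s E A"
  proof -
    have "m2mult s A E = m2mult s (m2mult s P (m2mult s B F)) Q"
      unfolding A E_def using PQ by (simp add: as) (metis as m2_one_left)
    also have "\<dots> = m2mult s (m2mult s P (m2mult s F B)) Q" using F(2) by simp
    also have "\<dots> = m2mult s E A"
      unfolding A E_def using PQ by (simp add: as) (metis as m2_one_left)
    finally show ?thesis .
  qed
  moreover have "m2_unit s (m2sub A E)"
  proof -
    have "m2sub A E = m2mult s (m2mult s P (m2sub B F)) Q"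
      unfolding A E_def by (simp add: m2_sub_left m2_sub_right)
    thus ?thesis using m2_unit_conj[OF c PQ(2) PQ(1) F(3)] by simp
  qed
  ultimately show ?thesis unfolding m2_strongly_clean_def by blast
qed

lemma unit_of_jac1:
  fixes v :: "'a::ring_1"
  shows "v - 1 \<in> jacobson \<Longrightarrow> is_unit v"
  using unit_one_minus[of "- (v - 1)"] jac_uminus by force

lemma unit_of_jac2:
  fixes w :: "'a::ring_1"
  shows "w \<in> jacobson \<Longrightarrow> is_unit (w - 1)"
  using unit_uminus[OF unit_one_minus[of w]] by simp

lemma sc_diag1:
  fixes v :: "'a::ring_1"
  assumes "v - 1 \<in> jacobson" "w \<in> jacobson"
  shows "m2_strongly_clean s (M2 w 0 0 v)"
  unfolding m2_strongly_clean_def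
  using assms
  by (intro exI[of _ "M2 1 0 0 0"]) (simp add: diag_unit unit_of_jac1 unit_of_jac2)

lemma sc_diag2:
  fixes v :: "'a::ring_1"
  assumes "v - 1 \<in> jacobson" "w \<in> jacobson"
  shows "m2_strongly_clean s (M2 v 0 0 w)"
  unfolding m2_strongly_clean_def
  using assms
  by (intro exI[of _ "M2 0 0 0 1"]) (simp add: diag_unit unit_of_jac1 unit_of_jac2)

lemma neg_one_unit: "m2_unit s (M2 (-1) 0 0 (-1::'a::ring_1))"
  using diag_unit unit_uminus[of 1] by (metis is_unit_def mult_1_left)

lemma sub_flip: "m2sub m2one A = m2mult s (M2 (-1) 0 0 (-1)) (m2sub A m2one)"
  by (cases A) (simp add: m2one_def)
lemma sub_flip': "m2sub A m2one = m2mult s (M2 (-1) 0 0 (-1)) (m2sub m2one A)"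
  by (cases A) (simp add: m2one_def)



theorem lemma2p11:
  fixes s :: "'a::ring_1" and A :: "'a m2"
  assumes "local_ring TYPE('a)" and "central s"
  shows "m2_strongly_clean s A \<longleftrightarrow>
    (m2_unit s A
     \<or> m2_unit s (m2sub m2one A)
     \<or> (is_unit s \<and> (\<exists>v w. v - 1 \<in> jacobson \<and> w \<in> jacobson \<and> m2_similar s A (M2 w 0 0 v)))
     \<or> (s \<in> jacobson \<and> (\<exists>v w. v - 1 \<in> jacobson \<and> w \<in> jacobson \<and>
            (m2_similar s A (M2 v 0 0 w) \<or> m2_similar s A (M2 w 0 0 v)))))"
proof
  note loc = assms(1) and c = assms(2)
  assume "m2_strongly_clean s A"
  then obtain E where Eid: "m2mult s E E = E" and comm: "m2mult s A E = m2mult s E A"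
    and u: "m2_unit s (m2sub A E)" unfolding m2_strongly_clean_def by blast
  show "m2_unit s A
     \<or> m2_unit s (m2sub m2one A)
     \<or> (is_unit s \<and> (\<exists>v w. v - 1 \<in> jacobson \<and> w \<in> jacobson \<and> m2_similar s A (M2 w 0 0 v)))
     \<or> (s \<in> jacobson \<and> (\<exists>v w. v - 1 \<in> jacobson \<and> w \<in> jacobson \<and>
            (m2_similar s A (M2 v 0 0 w) \<or> m2_similar s A (M2 w 0 0 v))))"
  proof (cases "m2_unit s A \<or> m2_unit s (m2sub m2one A)")
    case True thus ?thesis by blast
  next
    case False
    then have nA: "\<not> m2_unit s A" and nIA: "\<not> m2_unit s (m2sub m2one A)" by auto
    obtain e f g h where Edef: "E = M2 e f g h" by (cases E)
    have E0: "E \<noteq> M2 0 0 0 0"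
    proof
      assume "E = M2 0 0 0 0"
      then have "m2sub A E = A" by (cases A) simp
      thus False using u nA by simp
    qed
    have E1: "E \<noteq> m2one"
    proof
      assume "E = m2one"
      then have "m2_unit s (m2sub m2one A)"
        using sub_flip[of A s] m2_unit_mult[OF c neg_one_unit u] by simp
      thus False using nIA by simp
    qed
    have sJ: "is_unit s \<or> s \<in> jacobson" using not_jac_unit[OF loc] by blast
    have "e \<notin> jacobson \<or> h \<notin> jacobson"
      using nontriv[OF loc c _ _] Eid E0 unfolding Edef by blast
    then show ?thesis
    proof
      assume "e \<notin> jacobson"
      then obtain P Q where PQ: "m2mult s P Q = m2one" "m2mult s Q P = m2one"
        "m2mult s E P = m2mult s P (M2 1 0 0 0)"
        using conj_e[OF loc c, of e f g h] Eid E1 not_jac_unit[OF loc] unfolding Edef by blast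
      note R = reduce[OF c PQ(1,2) PQ(3) comm u]
      define B where "B = m2mult s (m2mult s Q A) P"
      obtain b1 b2 b3 b4 where Bd: "B = M2 b1 b2 b3 b4" by (cases B)
      have "b2 = 0" "b3 = 0" using R(1) unfolding B_def[symmetric] Bd by simp_all
      then have Bd: "B = M2 b1 0 0 b4" using Bd by simp
      have "m2_unit s (M2 (b1 - 1) 0 0 b4)" using R(2) unfolding B_def[symmetric] Bd by simp
      then have u1: "is_unit (b1 - 1)" "is_unit b4" by (simp_all add: diag_unit)
      have "\<not> m2_unit s B" using R(3) nA unfolding B_def by blast
      then have "\<not> is_unit b1" using u1 unfolding Bd diag_unit by blast
      then have b1: "b1 \<in> jacobson" using not_jac_unit[OF loc] by blast
      have "\<not> m2_unit s (m2sub m2one B)" using R(4) nIA unfolding B_def by blast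
      then have "\<not> is_unit (1 - b4)" using unit_uminus[OF u1(1)] unfolding Bd by (simp add: diag_unit m2one_def)
      then have "1 - b4 \<in> jacobson" using not_jac_unit[OF loc] by blast
      then have b4: "b4 - 1 \<in> jacobson" using jac_uminus by fastforce
      have sim: "m2_similar s A (M2 b1 0 0 b4)" using R(5) unfolding B_def[symmetric] Bd .
      show ?thesis using sJ b1 b4 sim by blast
    next
      assume "h \<notin> jacobson"
      then obtain P Q where PQ: "m2mult s P Q = m2one" "m2mult s Q P = m2one"
        "m2mult s E P = m2mult s P (M2 0 0 0 1)"
        using conj_h[OF loc c, of e f g h] Eid E1 not_jac_unit[OF loc] unfolding Edef by blast
      note R = reduce[OF c PQ(1,2) PQ(3) comm u]
      define B where "B = m2mult s (m2mult s Q A) P"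
      obtain b1 b2 b3 b4 where Bd: "B = M2 b1 b2 b3 b4" by (cases B)
      have "b2 = 0" "b3 = 0" using R(1) unfolding B_def[symmetric] Bd by simp_all
      then have Bd: "B = M2 b1 0 0 b4" using Bd by simp
      have "m2_unit s (M2 b1 0 0 (b4 - 1))" using R(2) unfolding B_def[symmetric] Bd by simp
      then have u1: "is_unit b1" "is_unit (b4 - 1)" by (simp_all add: diag_unit)
      have "\<not> m2_unit s B" using R(3) nA unfolding B_def by blast
      then have "\<not> is_unit b4" using u1 unfolding Bd diag_unit by blast
      then have b4: "b4 \<in> jacobson" using not_jac_unit[OF loc] by blast
      have "\<not> m2_unit s (m2sub m2one B)" using R(4) nIA unfolding B_def by blast
      then have "\<not> is_unit (1 - b1)" using unit_uminus[OF u1(2)] unfolding Bd by (simp add: diag_unit m2one_def)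
      then have "1 - b1 \<in> jacobson" using not_jac_unit[OF loc] by blast
      then have b1: "b1 - 1 \<in> jacobson" using jac_uminus by fastforce
      have sim: "m2_similar s A (M2 b1 0 0 b4)" using R(5) unfolding B_def[symmetric] Bd .
      show ?thesis
      proof (cases "is_unit s")
        case True
        then have "m2_similar s A (M2 b4 0 0 b1)" using similar_trans[OF c sim swap_similar[OF c True]] by blast
        thus ?thesis using True b1 b4 by blast
      next
        case False
        thus ?thesis using sJ b1 b4 sim by blast
      qed
    qed
  qed
next
  note loc = assms(1) and c = assms(2)
  assume H: "m2_unit s A
     \<or> m2_unit s (m2sub m2one A)
     \<or> (is_unit s \<and> (\<exists>v w. v - 1 \<in> jacobson \<and> w \<in> jacobson \<and> m2_similar s A (M2 w 0 0 v)))
     \<or> (s \<in> jacobson \<and> (\<exists>v w. v - 1 \<in> jacobson \<and> w \<in> jacobson \<and>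
            (m2_similar s A (M2 v 0 0 w) \<or> m2_similar s A (M2 w 0 0 v))))"
  show "m2_strongly_clean s A"
  proof -
    { assume "m2_unit s A"
      moreover have "m2sub A (M2 0 0 0 0) = A" by (cases A) simp
      moreover have "m2mult s A (M2 0 0 0 0) = m2mult s (M2 0 0 0 0) A" by (cases A) simp
      ultimately have ?thesis unfolding m2_strongly_clean_def
        by (intro exI[of _ "M2 0 0 0 0"]) simp }
    moreover
    { assume "m2_unit s (m2sub m2one A)"
      then have "m2_unit s (m2sub A m2one)"
        using sub_flip'[of A s] m2_unit_mult[OF c neg_one_unit] by simp
      then have ?thesis unfolding m2_strongly_clean_def
        by (intro exI[of _ m2one]) (simp add: m2one_def[symmetric]) }
    moreover
    { fix v w assume "v - 1 \<in> jacobson" "w \<in> jacobson" "m2_similar s A (M2 w 0 0 v)"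
      then have ?thesis using sc_similar[OF c] sc_diag1 by blast }
    moreover
    { fix v w assume "v - 1 \<in> jacobson" "w \<in> jacobson" "m2_similar s A (M2 v 0 0 w)"
      then have ?thesis using sc_similar[OF c] sc_diag2 by blast }
    ultimately show ?thesis using H by blast
  qed
qed

end
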